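(* Let $n\ge1$, $m\ge0$, let $z\in Z_{n,m}$ with $z_i=0$ for some $1\leq i\leq m$, and let $P=(z=x^0\sim x^1\sim\dots\sim x^d=0)$ be a geodesic in $Z_{n,m}$ between $z$ and $0$. Then, for either choice of sign, there exists a geodesic $P'=(z=y^0\sim y^1\sim\dots\sim y^d=0)$ such that (1) $y^t_i\leq0$ for all $0\leq t\leq d$ (respectively, $y^t_i\geq0$ for all $0\le t\le d$), and (2) $\{y^t_j:0\leq t\leq d\}=\{x^t_j:0\leq t\leq d\}$ for every $0\leq j\leq m+1$ with $j\neq i$.
   Context: Elements of $\mathbb{Z}_n$ are identified with representatives in $\{0,\dots,n-1\}$. The dYoke graph $Z_{n,m}$ has vertices $u=(u_0,\dots,u_{m+1})\in\mathbb{Z}_n\times\{-1,0,1\}^m\times\mathbb{Z}_n$ with $\sum_{i=0}^{m+1}u_i\equiv0\pmod n$; $u,v$ are adjacent if there is $0\leq i\leq m$ such that $u_j=v_j$ for $j\notin\{i,i+1\}$ and either ($u_i=v_i+1$, $u_{i+1}=v_{i+1}-1$) or ($u_i=v_i-1$, $u_{i+1}=v_{i+1}+1$), with arithmetic in coordinates $0,m+1$ in $\mathbb{Z}_n$. $0$ is the all-zero vertex. *)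

theory Defs
  imports Main
begin

text \<open>Vertices of the dYoke graph Z_{n,m} are int lists of length m+2; coordinates
  0 and m+1 are representatives in {0..n-1} of Z_n, the middle coordinates lie in {-1,0,1}.\<close>

definition dyoke_vert :: "nat \<Rightarrow> nat \<Rightarrow> int list \<Rightarrow> bool" where
  "dyoke_vert n m u \<longleftrightarrow> length u = m + 2
     \<and> 0 \<le> u ! 0 \<and> u ! 0 < int n
     \<and> 0 \<le> u ! (m+1) \<and> u ! (m+1) < int n
     \<and> (\<forall>j\<in>{1..m}. u ! j \<in> {-1, 0, 1})
     \<and> sum_list u mod int n = 0"

definition dyoke_coord_step :: "nat \<Rightarrow> nat \<Rightarrow> nat \<Rightarrow> int list \<Rightarrow> int list \<Rightarrow> int \<Rightarrow> bool" where
  "dyoke_coord_step n m j u v s \<longleftrightarrow>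
     (if j = 0 \<or> j = m + 1 then (u ! j - (v ! j + s)) mod int n = 0
      else u ! j = v ! j + s)"

definition dyoke_adj :: "nat \<Rightarrow> nat \<Rightarrow> int list \<Rightarrow> int list \<Rightarrow> bool" where
  "dyoke_adj n m u v \<longleftrightarrow> dyoke_vert n m u \<and> dyoke_vert n m v \<and>
     (\<exists>i\<le>m. (\<forall>j<m+2. j \<noteq> i \<and> j \<noteq> i + 1 \<longrightarrow> u ! j = v ! j)
        \<and> ((dyoke_coord_step n m i u v 1 \<and> dyoke_coord_step n m (i+1) u v (-1))
          \<or> (dyoke_coord_step n m i u v (-1) \<and> dyoke_coord_step n m (i+1) u v 1)))"

definition dyoke_zero :: "nat \<Rightarrow> int list" where
  "dyoke_zero m = replicate (m + 2) 0"

definition dyoke_walk :: "nat \<Rightarrow> nat \<Rightarrow> (nat \<Rightarrow> int list) \<Rightarrow> nat \<Rightarrow> bool" where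
  "dyoke_walk n m x d \<longleftrightarrow> (\<forall>t\<le>d. dyoke_vert n m (x t)) \<and>
     (\<forall>t<d. dyoke_adj n m (x t) (x (Suc t)))"

definition dyoke_geodesic :: "nat \<Rightarrow> nat \<Rightarrow> (nat \<Rightarrow> int list) \<Rightarrow> nat \<Rightarrow> int list \<Rightarrow> int list \<Rightarrow> bool" where
  "dyoke_geodesic n m x d a b \<longleftrightarrow> dyoke_walk n m x d \<and> x 0 = a \<and> x d = b \<and>
     (\<forall>y d'. dyoke_walk n m y d' \<and> y 0 = a \<and> y d' = b \<longrightarrow> d \<le> d')"

end

theory Submission
  imports Defs
begin

definition nrm :: "nat \<Rightarrow> nat \<Rightarrow> nat \<Rightarrow> int \<Rightarrow> int" where
  "nrm n m j a = (if j = 0 \<or> j = m+1 then a mod int n else a)"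

definition vtx :: "nat \<Rightarrow> nat \<Rightarrow> (nat \<Rightarrow> int) \<Rightarrow> int list" where
  "vtx n m f = map (\<lambda>j. nrm n m j (f j)) [0..<m+2]"

definition ev :: "nat \<times> int \<Rightarrow> nat \<Rightarrow> int" where
  "ev l j = (if j = fst l then - snd l else if j = Suc (fst l) then snd l else 0)"

definition stepok :: "nat \<Rightarrow> nat \<times> int \<Rightarrow> bool" where
  "stepok m l \<longleftrightarrow> fst l \<le> m \<and> (snd l = 1 \<or> snd l = -1)"

lemma vtx_len[simp]: "length (vtx n m f) = m + 2"
  by (simp add: vtx_def)

lemma vtx_nth: "j < m + 2 \<Longrightarrow> vtx n m f ! j = nrm n m j (f j)"
  unfolding vtx_def by (subst nth_map_upt) auto

lemma vtx_nth_int: "1 \<le> j \<Longrightarrow> j \<le> m \<Longrightarrow> vtx n m f ! j = f j"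
  by (simp add: vtx_nth nrm_def)

lemma sum_vtx: "sum_list (vtx n m f) = (\<Sum>j<m+2. nrm n m j (f j))"
proof -
  have "sum_list (vtx n m f) = sum_list (map (\<lambda>j. nrm n m j (f j)) [0..<m+2])"
    by (simp add: vtx_def)
  also have "\<dots> = (\<Sum>j\<in>set [0..<m+2]. nrm n m j (f j))"
    by (simp only: sum_set_upt_conv_sum_list_nat)
  also have "set [0..<m+2] = {..<m+2}" by auto
  finally show ?thesis .
qed

lemma sum_nrm_mod: "(\<Sum>j<m+2. nrm n m j (f j)) mod int n = (\<Sum>j<m+2. f j) mod int n"
proof -
  have "(\<Sum>j<m+2. nrm n m j (f j)) mod int n = (\<Sum>j<m+2. nrm n m j (f j) mod int n) mod int n"
    by (rule mod_sum_eq[symmetric])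
  also have "(\<Sum>j<m+2. nrm n m j (f j) mod int n) = (\<Sum>j<m+2. f j mod int n)"
    by (rule sum.cong) (auto simp: nrm_def)
  also have "(\<Sum>j<m+2. f j mod int n) mod int n = (\<Sum>j<m+2. f j) mod int n"
    by (rule mod_sum_eq)
  finally show ?thesis .
qed

lemma V_vtx:
  assumes "n \<ge> 1"
  shows "dyoke_vert n m (vtx n m f) \<longleftrightarrow>
     (\<forall>j. 1 \<le> j \<and> j \<le> m \<longrightarrow> f j \<in> {-1,0,1}) \<and> (\<Sum>j<m+2. f j) mod int n = 0"
proof -
  have e0: "0 \<le> vtx n m f ! 0 \<and> vtx n m f ! 0 < int n"
    using assms by (simp add: vtx_nth nrm_def)
  have e1: "0 \<le> vtx n m f ! (m+1) \<and> vtx n m f ! (m+1) < int n"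
    using assms by (simp add: vtx_nth nrm_def)
  show ?thesis
    unfolding dyoke_vert_def using e0 e1
    by (simp only: vtx_len sum_vtx sum_nrm_mod) (auto simp: vtx_nth_int)
qed

lemma vtx_self:
  assumes "dyoke_vert n m u"
  shows "vtx n m (\<lambda>j. u ! j) = u"
proof (rule nth_equalityI)
  show "length (vtx n m (\<lambda>j. u ! j)) = length u" using assms by (simp add: dyoke_vert_def)
  fix j assume "j < length (vtx n m (\<lambda>j. u ! j))"
  then have j: "j < m + 2" by simp
  show "vtx n m (\<lambda>j. u ! j) ! j = u ! j"
    using assms j by (auto simp: vtx_nth nrm_def dyoke_vert_def)
qed

lemma vtx_cong:
  assumes "\<And>j. j < m + 2 \<Longrightarrow> nrm n m j (f j) = nrm n m j (g j)"
  shows "vtx n m f = vtx n m g"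
  using assms by (simp add: vtx_def)

lemma nrm_add: "nrm n m j (nrm n m j a + b) = nrm n m j (a + b)"
  by (simp add: nrm_def mod_add_left_eq)

lemma ev_sum: "fst l \<le> m \<Longrightarrow> (\<Sum>j<m+2. ev l j) = 0"
proof -
  assume k: "fst l \<le> m"
  have "(\<Sum>j<m+2. ev l j) = (\<Sum>j<m+2. (if j = fst l then - snd l else 0)) + (\<Sum>j<m+2. (if j = Suc (fst l) then snd l else 0))"
    by (subst sum.distrib[symmetric]) (rule sum.cong, auto simp: ev_def)
  also have "\<dots> = 0" using k by (simp add: sum.delta)
  finally show ?thesis .
qed

lemma ev_vals: "stepok m l \<Longrightarrow> ev l j \<in> {-1,0,1}"
  by (auto simp: ev_def stepok_def)

lemma ev_nz: "stepok m l \<Longrightarrow> ev l j \<noteq> 0 \<longleftrightarrow> (j = fst l \<or> j = Suc (fst l))"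
  by (auto simp: ev_def stepok_def)

lemma modeq_aux:
  fixes a b s :: int
  assumes "0 \<le> b" "b < int n" "(a - (b + s)) mod int n = 0"
  shows "b = (a - s) mod int n"
proof -
  have "int n dvd (a - s) - b" using assms(3) by (simp add: algebra_simps dvd_eq_mod_eq_0)
  then have "(a - s) mod int n = b mod int n" by (simp add: mod_eq_dvd_iff)
  with assms show ?thesis by simp
qed

lemma mm_aux:
  fixes a b s c :: int
  shows "(a mod c - (b mod c + s)) mod c = (a - (b + s)) mod c"
proof -
  have "(a mod c - (b mod c + s)) mod c = (a - (b mod c + s)) mod c" by (rule mod_diff_left_eq)
  also have "\<dots> = (a - (b mod c + s) mod c) mod c" by (rule mod_diff_right_eq[symmetric])
  also have "(b mod c + s) mod c = (b + s) mod c" by (rule mod_add_left_eq)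
  also have "(a - (b + s) mod c) mod c = (a - (b + s)) mod c" by (rule mod_diff_right_eq)
  finally show ?thesis .
qed

lemma coord_step_vtx:
  assumes "j < m + 2"
  shows "dyoke_coord_step n m j (vtx n m f) (vtx n m g) s \<longleftrightarrow>
     (if j = 0 \<or> j = m + 1 then (f j - (g j + s)) mod int n = 0 else f j = g j + s)"
  using assms by (auto simp: dyoke_coord_step_def vtx_nth nrm_def mm_aux)

lemma adj_vtx:
  assumes "dyoke_vert n m (vtx n m f)" "dyoke_vert n m (vtx n m g)" "stepok m l"
    and "\<And>j. g j = f j + ev l j"
  shows "dyoke_adj n m (vtx n m f) (vtx n m g)"
proof -
  obtain k s where l: "l = (k, s)" by (cases l)
  have k: "k \<le> m" and s: "s = 1 \<or> s = -1" using assms(3) by (auto simp: stepok_def l)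
  have same: "\<forall>j<m+2. j \<noteq> k \<and> j \<noteq> k + 1 \<longrightarrow> vtx n m f ! j = vtx n m g ! j"
    using assms(4) by (auto simp: vtx_nth ev_def l)
  have gk: "g k = f k - s" "g (k+1) = f (k+1) + s" using assms(4) by (auto simp: ev_def l)
  have "k \<le> m \<and> (\<forall>j<m + 2. j \<noteq> k \<and> j \<noteq> k + 1 \<longrightarrow> vtx n m f ! j = vtx n m g ! j) \<and>
     (dyoke_coord_step n m k (vtx n m f) (vtx n m g) 1 \<and> dyoke_coord_step n m (k + 1) (vtx n m f) (vtx n m g) (- 1) \<or>
      dyoke_coord_step n m k (vtx n m f) (vtx n m g) (- 1) \<and> dyoke_coord_step n m (k + 1) (vtx n m f) (vtx n m g) 1)"
      using k same s gk by (auto simp: coord_step_vtx)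
  then show ?thesis unfolding dyoke_adj_def using assms(1,2) by blast
qed

lemma adj_step:
  assumes "dyoke_adj n m u v"
  shows "\<exists>l. stepok m l \<and> v = vtx n m (\<lambda>j. u ! j + ev l j)"
proof -
  from assms obtain k where k: "k \<le> m" and vu: "dyoke_vert n m u" "dyoke_vert n m v"
    and same: "\<forall>j<m+2. j \<noteq> k \<and> j \<noteq> k + 1 \<longrightarrow> u ! j = v ! j"
    and st: "(dyoke_coord_step n m k u v 1 \<and> dyoke_coord_step n m (k+1) u v (-1))
          \<or> (dyoke_coord_step n m k u v (-1) \<and> dyoke_coord_step n m (k+1) u v 1)"
    unfolding dyoke_adj_def by blast
  have len: "length u = m + 2" "length v = m + 2" using vu by (auto simp: dyoke_vert_def)
  have vr: "\<And>j. j = 0 \<or> j = m + 1 \<Longrightarrow> 0 \<le> v ! j \<and> v ! j < int n" using vu by (auto simp: dyoke_vert_def)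
  have ur: "\<And>j. j = 0 \<or> j = m + 1 \<Longrightarrow> 0 \<le> u ! j \<and> u ! j < int n" using vu by (auto simp: dyoke_vert_def)
  have key: "v = vtx n m (\<lambda>j. u ! j + ev (k, s) j)"
    if s: "dyoke_coord_step n m k u v s" "dyoke_coord_step n m (k+1) u v (-s)" for s
  proof (rule nth_equalityI)
    show "length v = length (vtx n m (\<lambda>j. u ! j + ev (k, s) j))" using len by simp
    fix j assume "j < length v"
    then have j: "j < m + 2" using len by simp
    show "v ! j = vtx n m (\<lambda>j. u ! j + ev (k, s) j) ! j"
    proof (cases "j = k \<or> j = k + 1")
      case True
      then show ?thesis
      proof
        assume jk: "j = k"
        show ?thesis
        proof (cases "j = 0 \<or> j = m + 1")
          case True
          then show ?thesis using s(1) jk j vr[of j] modeq_aux[of "v ! j" n "u ! j" s]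
            by (auto simp: vtx_nth nrm_def dyoke_coord_step_def ev_def)
        next
          case False
          then show ?thesis using s(1) jk j by (auto simp: vtx_nth nrm_def dyoke_coord_step_def ev_def)
        qed
      next
        assume jk: "j = k + 1"
        show ?thesis
        proof (cases "j = 0 \<or> j = m + 1")
          case True
          then show ?thesis using s(2) jk j vr[of j] modeq_aux[of "v ! j" n "u ! j" "-s"]
            by (auto simp: vtx_nth nrm_def dyoke_coord_step_def ev_def)
        next
          case False
          then show ?thesis using s(2) jk j by (auto simp: vtx_nth nrm_def dyoke_coord_step_def ev_def)
        qed
      qed
    next
      case False
      then show ?thesis using same j ur[of j] by (auto simp: vtx_nth nrm_def ev_def)
    qed
  qed
  from st show ?thesis
  proof
    assume "dyoke_coord_step n m k u v 1 \<and> dyoke_coord_step n m (k+1) u v (-1)"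
    then show ?thesis using key[of 1] k by (auto simp: stepok_def)
  next
    assume "dyoke_coord_step n m k u v (-1) \<and> dyoke_coord_step n m (k+1) u v 1"
    then show ?thesis using key[of "-1"] k by (auto simp: stepok_def)
  qed
qed

definition stepsok :: "nat \<Rightarrow> (nat \<Rightarrow> nat \<Rightarrow> int) \<Rightarrow> (nat \<Rightarrow> nat \<times> int) \<Rightarrow> nat \<Rightarrow> bool" where
  "stepsok m H l d \<longleftrightarrow> (\<forall>t<d. stepok m (l t) \<and> (\<forall>j. H (Suc t) j = H t j + ev (l t) j))"

lemma sum_inv:
  assumes "stepsok m H l d" "t \<le> d"
  shows "(\<Sum>j<m+2. H t j) = (\<Sum>j<m+2. H 0 j)"
  using assms(2)
proof (induction t)
  case (Suc t)
  then have st: "stepok m (l t)" "\<And>j. H (Suc t) j = H t j + ev (l t) j"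
    using assms(1) by (auto simp: stepsok_def)
  have "(\<Sum>j<m+2. H (Suc t) j) = (\<Sum>j<m+2. H t j) + (\<Sum>j<m+2. ev (l t) j)"
    by (simp add: st(2) sum.distrib)
  also have "(\<Sum>j<m+2. ev (l t) j) = 0" using st(1) ev_sum by (auto simp: stepok_def)
  finally show ?case using Suc by simp
qed simp

lemma walk_from_H:
  assumes "n \<ge> 1" "stepsok m H l d"
    and "\<And>t j. t \<le> d \<Longrightarrow> 1 \<le> j \<Longrightarrow> j \<le> m \<Longrightarrow> H t j \<in> {-1,0,1}"
    and "(\<Sum>j<m+2. H 0 j) mod int n = 0"
  shows "dyoke_walk n m (\<lambda>t. vtx n m (H t)) d"
proof -
  have V: "dyoke_vert n m (vtx n m (H t))" if "t \<le> d" for t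
    using assms(3)[OF that] sum_inv[OF assms(2) that] assms(4) V_vtx[OF assms(1)] by simp
  show ?thesis unfolding dyoke_walk_def
  proof (intro conjI allI impI)
    fix t assume "t \<le> d" then show "dyoke_vert n m (vtx n m (H t))" by (rule V)
  next
    fix t assume t: "t < d"
    then show "dyoke_adj n m (vtx n m (H t)) (vtx n m (H (Suc t)))"
      using V[of t] V[of "Suc t"] assms(2) adj_vtx[of n m "H t" "H (Suc t)" "l t"]
      by (auto simp: stepsok_def)
  qed
qed

lemma H_from_walk:
  assumes "dyoke_walk n m x d"
  shows "\<exists>H l. stepsok m H l d \<and> (\<forall>t\<le>d. x t = vtx n m (H t)) \<and> (\<forall>j. H 0 j = x 0 ! j)"
proof -
  have "\<forall>t. \<exists>l. t < d \<longrightarrow> stepok m l \<and> x (Suc t) = vtx n m (\<lambda>j. x t ! j + ev l j)"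
  proof
    fix t show "\<exists>l. t < d \<longrightarrow> stepok m l \<and> x (Suc t) = vtx n m (\<lambda>j. x t ! j + ev l j)"
    proof (cases "t < d")
      case True
      then have "dyoke_adj n m (x t) (x (Suc t))" using assms by (simp add: dyoke_walk_def)
      then show ?thesis using adj_step by blast
    qed simp
  qed
  then obtain l where l0: "\<forall>t. t < d \<longrightarrow> stepok m (l t) \<and> x (Suc t) = vtx n m (\<lambda>j. x t ! j + ev (l t) j)"
    by (rule choice[THEN exE]) blast
  then have l: "\<And>t. t < d \<Longrightarrow> stepok m (l t) \<and> x (Suc t) = vtx n m (\<lambda>j. x t ! j + ev (l t) j)" by blast
  define H where "H t j = x 0 ! j + (\<Sum>q<t. ev (l q) j)" for t j
  have st: "stepsok m H l d" using l by (auto simp: stepsok_def H_def)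
  have "x t = vtx n m (H t)" if "t \<le> d" for t
    using that
  proof (induction t)
    case 0
    have "dyoke_vert n m (x 0)" using assms by (auto simp: dyoke_walk_def)
    then show ?case using vtx_self[of n m "x 0"] by (simp add: H_def)
  next
    case (Suc t)
    then have IH: "x t = vtx n m (H t)" by simp
    have "x (Suc t) = vtx n m (\<lambda>j. x t ! j + ev (l t) j)" using l Suc by auto
    also have "\<dots> = vtx n m (H (Suc t))"
    proof (rule vtx_cong)
      fix j assume "j < m + 2"
      then have "x t ! j = nrm n m j (H t j)" using IH by (simp add: vtx_nth)
      then show "nrm n m j (x t ! j + ev (l t) j) = nrm n m j (H (Suc t) j)"
        using st Suc by (simp add: nrm_add stepsok_def)
    qed
    finally show ?case .
  qed
  then show ?thesis using st by (auto simp: H_def)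
qed

lemma walk_H_range:
  assumes "dyoke_walk n m x d" "\<forall>t\<le>d. x t = vtx n m (H t)" "t \<le> d" "1 \<le> j" "j \<le> m"
  shows "H t j \<in> {-1,0,1}" "x t ! j = H t j"
proof -
  have "dyoke_vert n m (x t)" using assms by (auto simp: dyoke_walk_def)
  then have "x t ! j \<in> {-1,0,1}" using assms(4,5) by (auto simp: dyoke_vert_def)
  moreover show "x t ! j = H t j" using assms by (simp add: vtx_nth_int)
  ultimately show "H t j \<in> {-1,0,1}" by simp
qed

lemma walk_H_sum:
  assumes "n \<ge> 1" "dyoke_walk n m x d" "\<forall>t\<le>d. x t = vtx n m (H t)"
  shows "(\<Sum>j<m+2. H 0 j) mod int n = 0"
proof -
  have "dyoke_vert n m (x 0)" using assms by (auto simp: dyoke_walk_def)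
  then show ?thesis using assms V_vtx by auto
qed

lemma const_coord:
  assumes "stepsok m H l d" "\<forall>q. a \<le> q \<and> q < b \<longrightarrow> ev (l q) j = 0" "a \<le> b" "b \<le> d"
  shows "H b j = H a j"
  using assms(2,3,4)
proof (induction b)
  case (Suc b)
  show ?case
  proof (cases "a = Suc b")
    case False
    then have "a \<le> b" using Suc by simp
    then show ?thesis using Suc assms(1) by (auto simp: stepsok_def)
  qed simp
qed simp

lemma up_step:
  fixes f :: "nat \<Rightarrow> int"
  assumes "f u \<le> 0" "1 \<le> f v" "u \<le> v"
  shows "\<exists>q. u \<le> q \<and> q < v \<and> f q < f (Suc q)"
  using assms(2,3)
proof (induction v)
  case 0 then show ?case using assms(1) by simp
next
  case (Suc v)
  show ?case
  proof (cases "u = Suc v")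
    case True then show ?thesis using Suc assms(1) by simp
  next
    case False
    then have uv: "u \<le> v" using Suc by simp
    show ?thesis
    proof (cases "1 \<le> f v")
      case True then show ?thesis using Suc.IH uv by (meson less_Suc_eq)
    next
      case False then show ?thesis using Suc uv by (intro exI[of _ v]) auto
    qed
  qed
qed

lemma down_step:
  fixes f :: "nat \<Rightarrow> int"
  assumes "1 \<le> f u" "f v \<le> 0" "u \<le> v"
  shows "\<exists>q. u \<le> q \<and> q < v \<and> f (Suc q) < f q"
  using up_step[of "\<lambda>q. 1 - f q" u v] assms by auto

lemma rotate:
  assumes n1: "n \<ge> 1" and st: "stepsok m H l d"
    and rng: "\<And>t j. t \<le> d \<Longrightarrow> 1 \<le> j \<Longrightarrow> j \<le> m \<Longrightarrow> H t j \<in> {-1,0,1}"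
    and sum0: "(\<Sum>j<m+2. H 0 j) mod int n = 0"
    and sp: "s < p" "p < d"
    and noconf: "\<And>j q. ev (l p) j \<noteq> 0 \<Longrightarrow> j \<noteq> i \<Longrightarrow> s \<le> q \<Longrightarrow> q < p \<Longrightarrow> ev (l q) j = 0"
    and rngi: "\<And>t. s < t \<Longrightarrow> t \<le> p \<Longrightarrow> H (t-1) i + ev (l p) i \<in> {-1,0,1}"
    and H'def: "H' = (\<lambda>t. if s < t \<and> t \<le> p then (\<lambda>j. H (t-1) j + ev (l p) j) else H t)"
  shows "dyoke_walk n m (\<lambda>t. vtx n m (H' t)) d"
    and "\<And>j t. j \<noteq> i \<Longrightarrow> t \<le> d \<Longrightarrow> \<exists>t'\<le>d. H' t j = H t' j"
    and "\<And>j t. j \<noteq> i \<Longrightarrow> t \<le> d \<Longrightarrow> \<exists>t'\<le>d. H t j = H' t' j"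
proof -
  have stp: "stepok m (l t)" "\<And>j. H (Suc t) j = H t j + ev (l t) j" if "t < d" for t
    using st that by (auto simp: stepsok_def)
  have cst: "H t j = H s j" if "ev (l p) j \<noteq> 0" "j \<noteq> i" "s \<le> t" "t \<le> p" for t j
    using const_coord[OF st, of s t j] noconf[OF that(1,2)] that sp by auto
  have fwd: "H' t j = H (t-1) j \<or> H' t j = H (Suc p) j" if "s < t" "t \<le> p" "j \<noteq> i" for t j
  proof (cases "ev (l p) j = 0")
    case True then show ?thesis using that by (simp add: H'def)
  next
    case False
    have "H (t-1) j = H s j" using cst[OF False that(3), of "t-1"] that by auto
    moreover have "H p j = H s j" using cst[OF False that(3), of p] sp by auto
    ultimately show ?thesis using that stp(2)[of p] sp by (simp add: H'def)
  qed
  have bwd: "H t j = H' (Suc t) j \<or> H t j = H' s j" if "s < t" "t \<le> p" "j \<noteq> i" for t j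
  proof (cases "ev (l p) j = 0")
    case True
    show ?thesis
    proof (cases "t = p")
      case True
      then show ?thesis using stp(2)[of p] sp \<open>ev (l p) j = 0\<close> by (simp add: H'def)
    next
      case False
      then show ?thesis using that \<open>ev (l p) j = 0\<close> by (simp add: H'def)
    qed
  next
    case False
    then show ?thesis using cst[OF False that(3), of t] that by (simp add: H'def)
  qed
  define l' where "l' t = (if t = s then l p else if s < t \<and> t \<le> p then l (t - 1) else l t)" for t
  have st': "stepsok m H' l' d"
    unfolding stepsok_def
  proof (intro allI impI, rule conjI)
    fix t assume t: "t < d"
    show "stepok m (l' t)" using stp(1) t sp by (auto simp: l'_def)
    show "\<forall>j. H' (Suc t) j = H' t j + ev (l' t) j"
    proof
      fix j
      consider "t < s" | "t = s" | "s < t \<and> t < p" | "t = p" | "p < t" by linarith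
      then show "H' (Suc t) j = H' t j + ev (l' t) j"
      proof cases
        case 1 then show ?thesis using stp(2)[OF t] by (auto simp: H'def l'_def)
      next
        case 2 then show ?thesis using sp by (auto simp: H'def l'_def)
      next
        case 3 then show ?thesis using stp(2)[of "t-1"] t by (auto simp: H'def l'_def)
      next
        case 4
        then have "H (Suc p) j = H (p - 1) j + ev (l (p-1)) j + ev (l p) j"
          using stp(2)[of p] stp(2)[of "p-1"] sp by auto
        then show ?thesis using 4 sp by (auto simp: H'def l'_def)
      next
        case 5 then show ?thesis using stp(2)[OF t] sp by (auto simp: H'def l'_def)
      qed
    qed
  qed
  have rng': "H' t j \<in> {-1,0,1}" if "t \<le> d" "1 \<le> j" "j \<le> m" for t j
  proof (cases "s < t \<and> t \<le> p")
    case True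
    show ?thesis
    proof (cases "j = i")
      case True then show ?thesis using rngi \<open>s < t \<and> t \<le> p\<close> by (simp add: H'def)
    next
      case False
      then show ?thesis using fwd[of t j] \<open>s < t \<and> t \<le> p\<close> rng[of "t-1" j] rng[of "Suc p" j] that sp by auto
    qed
  next
    case False then show ?thesis using rng[OF that] by (auto simp: H'def)
  qed
  have "H' 0 = H 0" by (simp add: H'def)
  then show "dyoke_walk n m (\<lambda>t. vtx n m (H' t)) d"
    using walk_from_H[OF n1 st' rng'] sum0 by simp
  show "\<exists>t'\<le>d. H' t j = H t' j" if "j \<noteq> i" "t \<le> d" for j t
  proof (cases "s < t \<and> t \<le> p")
    case True
    from True that(1) have "H' t j = H (t-1) j \<or> H' t j = H (Suc p) j" by (intro fwd) auto
    then show ?thesis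
    proof
      assume "H' t j = H (t-1) j" then show ?thesis using True that by (intro exI[of _ "t-1"]) auto
    next
      assume "H' t j = H (Suc p) j" then show ?thesis using sp by (intro exI[of _ "Suc p"]) auto
    qed
  next
    case False then show ?thesis using that by (auto simp: H'def)
  qed
  show "\<exists>t'\<le>d. H t j = H' t' j" if "j \<noteq> i" "t \<le> d" for j t
  proof (cases "s < t \<and> t \<le> p")
    case True
    from True that(1) have "H t j = H' (Suc t) j \<or> H t j = H' s j" by (intro bwd) auto
    then show ?thesis
    proof
      assume "H t j = H' (Suc t) j" then show ?thesis using True sp by (intro exI[of _ "Suc t"]) auto
    next
      assume "H t j = H' s j" then show ?thesis using sp by (intro exI[of _ s]) auto
    qed
  next
    case False then show ?thesis using that by (auto simp: H'def)
  qed
qed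

lemma same_sign:
  assumes n1: "n \<ge> 1" and geo: "dyoke_geodesic n m x d z w"
    and st: "stepsok m H l d" and xH: "\<forall>t\<le>d. x t = vtx n m (H t)"
  shows "\<forall>a b. a < b \<and> b < d \<and> fst (l a) = fst (l b) \<longrightarrow> snd (l a) = snd (l b)"
proof -
  have walk: "dyoke_walk n m x d" and x0: "x 0 = z" and xd: "x d = w"
    and mini: "\<And>y d'. dyoke_walk n m y d' \<Longrightarrow> y 0 = z \<Longrightarrow> y d' = w \<Longrightarrow> d \<le> d'"
    using geo by (auto simp: dyoke_geodesic_def)
  have stp: "stepok m (l t)" "\<And>j. H (Suc t) j = H t j + ev (l t) j" if "t < d" for t
    using st that by (auto simp: stepsok_def)
  have rng: "H t j \<in> {-1,0,1}" if "t \<le> d" "1 \<le> j" "j \<le> m" for t j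
    using walk_H_range(1)[OF walk xH that] .
  have sum0: "(\<Sum>j<m+2. H 0 j) mod int n = 0" using walk_H_sum[OF n1 walk xH] .
  have main: "\<forall>a b. b - a = g \<longrightarrow> a < b \<and> b < d \<and> fst (l a) = fst (l b) \<longrightarrow> snd (l a) = snd (l b)" for g
  proof (induction g rule: less_induct)
    case (less g)
    show ?case
    proof (intro allI impI)
      fix a b assume gab: "b - a = g" and ab: "a < b \<and> b < d \<and> fst (l a) = fst (l b)"
      have IH: "snd (l a') = snd (l b')" if "a' < b'" "b' < d" "b' - a' < b - a" "fst (l a') = fst (l b')" for a' b'
        using less.IH[of "b' - a'"] that gab by blast
      show "snd (l a) = snd (l b)"
      proof (rule ccontr)
        assume neq: "snd (l a) \<noteq> snd (l b)"
        define k where "k = fst (l a)"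
        have sa: "stepok m (l a)" and sb: "stepok m (l b)" using stp ab by auto
        have sgn: "snd (l b) = - snd (l a)" using sa sb neq by (auto simp: stepok_def)
        have evb: "ev (l b) j = - ev (l a) j" for j
          using sgn ab by (auto simp: ev_def)
        have noK: "fst (l q) \<noteq> k" if "a < q" "q < b" for q
        proof
          assume "fst (l q) = k"
          then have "snd (l a) = snd (l q)" "snd (l q) = snd (l b)"
            using IH[of a q] IH[of q b] that ab k_def by auto
          then show False using neq by simp
        qed
        have C: "H (Suc t) j - ev (l a) j \<in> {-1,0,1}" if "1 \<le> j" "j \<le> m" "a \<le> t" "t < b" for j t
        proof (cases "ev (l a) j = 0")
          case True then show ?thesis using rng[of "Suc t" j] that ab by auto
        next
          case False
          define tau where "tau = - ev (l a) j"
          have tau: "tau = 1 \<or> tau = -1" using ev_vals[OF sa, of j] False by (auto simp: tau_def)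
          show ?thesis
          proof (rule ccontr)
            assume bad: "H (Suc t) j - ev (l a) j \<notin> {-1,0,1}"
            define g where "g q = tau * H q j" for q
            have gt: "g (Suc t) = 1" using bad tau rng[of "Suc t" j] that ab by (auto simp: g_def tau_def)
            have gd: "g (Suc q) - g q = tau * ev (l q) j" if "q < d" for q
              using stp(2)[OF that] by (simp add: g_def algebra_simps)
            have ga: "g (Suc a) \<le> 0"
              using gd[of a] ab tau rng[of a j] that by (auto simp: g_def tau_def)
            have gb: "g b \<le> 0"
              using gd[of b] ab tau rng[of "Suc b" j] that evb[of j] by (auto simp: g_def tau_def)
            obtain q1 where q1: "Suc a \<le> q1" "q1 < Suc t" "g q1 < g (Suc q1)"
              using up_step[of g "Suc a" "Suc t"] ga gt \<open>a \<le> t\<close> by auto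
            obtain q2 where q2: "Suc t \<le> q2" "q2 < b" "g (Suc q2) < g q2"
              using down_step[of g "Suc t" b] gb gt \<open>t < b\<close> by auto
            have e1: "tau * ev (l q1) j > 0" using gd[of q1] q1 q2 ab by auto
            have e2: "tau * ev (l q2) j < 0" using gd[of q2] q2 ab by auto
            have nz1: "ev (l q1) j \<noteq> 0" using e1 by auto
            have nz2: "ev (l q2) j \<noteq> 0" using e2 by auto
            have s1: "stepok m (l q1)" "stepok m (l q2)" using stp q1 q2 ab by auto
            have j1: "j = fst (l q1) \<or> j = Suc (fst (l q1))" using ev_nz[OF s1(1)] nz1 by auto
            have j2: "j = fst (l q2) \<or> j = Suc (fst (l q2))" using ev_nz[OF s1(2)] nz2 by auto
            have ja: "j = k \<or> j = Suc k" using ev_nz[OF sa] False k_def by auto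
            have n1': "fst (l q1) \<noteq> k" "fst (l q2) \<noteq> k" using noK q1 q2 by auto
            have fe: "fst (l q1) = fst (l q2)" using j1 j2 ja n1' by arith
            have "snd (l q1) = snd (l q2)" using IH[of q1 q2] q1 q2 ab fe by auto
            then have "l q1 = l q2" using fe by (simp add: prod_eq_iff)
            then show False using e1 e2 by simp
          qed
        qed
        define H2 where "H2 t = (if t < a then H t else if Suc t < b then (\<lambda>j. H (Suc t) j - ev (l a) j) else H (t+2))" for t
        define l2 where "l2 t = (if t < a then l t else if Suc t < b then l (Suc t) else l (t+2))" for t
        have Hb1: "H (Suc b) j = H b j - ev (l a) j" for j using stp(2)[of b] ab evb by auto
        have mid: "H2 t j = H (Suc t) j - ev (l a) j" if "a \<le> t" "t < b" for t j
        proof (cases "Suc t < b")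
          case True then show ?thesis using that by (auto simp: H2_def)
        next
          case False
          then have tb: "Suc t = b" using that by auto
          then show ?thesis using that Hb1[of j] by (auto simp: H2_def)
        qed
        have Ha: "H (Suc a) j - ev (l a) j = H a j" for j using stp(2)[of a] ab by auto
        have st2: "stepsok m H2 l2 (d - 2)"
          unfolding stepsok_def
        proof (intro allI impI, rule conjI)
          fix t assume t: "t < d - 2"
          show "stepok m (l2 t)" using stp(1) t by (auto simp: l2_def)
          show "\<forall>j. H2 (Suc t) j = H2 t j + ev (l2 t) j"
          proof
            fix j
            consider "Suc t < a" | "Suc t = a" | "a \<le> t \<and> Suc t < b" | "a \<le> t \<and> b \<le> Suc t" by linarith
            then show "H2 (Suc t) j = H2 t j + ev (l2 t) j"
            proof cases
              case 1 then show ?thesis using stp(2)[of t] t ab by (auto simp: H2_def l2_def)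
            next
              case 2
              then have "H2 (Suc t) j = H a j" using mid[of a j] Ha[of j] ab by auto
              then show ?thesis using 2 stp(2)[of t] ab by (auto simp: H2_def l2_def)
            next
              case 3
              then show ?thesis using mid[of t j] mid[of "Suc t" j] stp(2)[of "Suc t"] t by (auto simp: l2_def)
            next
              case 4
              have "H2 t j = H (t+2) j"
              proof (cases "Suc t = b")
                case True then show ?thesis using mid[of t j] Hb1[of j] 4 by auto
              next
                case False then show ?thesis using 4 by (auto simp: H2_def)
              qed
              moreover have "H2 (Suc t) j = H (Suc t + 2) j" using 4 by (auto simp: H2_def)
              ultimately show ?thesis using 4 stp(2)[of "t+2"] t by (auto simp: l2_def)
            qed
          qed
        qed
        have rng2: "H2 t j \<in> {-1,0,1}" if "t \<le> d - 2" "1 \<le> j" "j \<le> m" for t j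
        proof -
          consider "t < a" | "a \<le> t \<and> t < b" | "b \<le> t" by linarith
          then show ?thesis
          proof cases
            case 1 then show ?thesis using rng[of t j] that ab by (auto simp: H2_def)
          next
            case 2 then show ?thesis using mid[of t j] C[of j t] that by auto
          next
            case 3 then show ?thesis using rng[of "t+2" j] that ab by (auto simp: H2_def)
          qed
        qed
        have H20: "H2 0 = H 0"
        proof
          fix j show "H2 0 j = H 0 j"
          proof (cases "a = 0")
            case True then show ?thesis using mid[of 0 j] Ha[of j] ab by auto
          next
            case False then show ?thesis by (simp add: H2_def)
          qed
        qed
        have H2d: "H2 (d - 2) = H d"
        proof
          fix j show "H2 (d-2) j = H d j"
          proof (cases "d - 2 < b")
            case True
            then have e: "Suc (d - 2) = b" "Suc b = d" "a \<le> d - 2" using ab by auto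
            have "H2 (d-2) j = H (Suc (d-2)) j - ev (l a) j" using mid[of "d-2" j] e True by auto
            also have "\<dots> = H d j" using e Hb1[of j] by simp
            finally show ?thesis .
          next
            case False
            then have "Suc (Suc (d - 2)) = d" using ab by auto
            then show ?thesis using False ab by (auto simp: H2_def)
          qed
        qed
        have w2: "dyoke_walk n m (\<lambda>t. vtx n m (H2 t)) (d - 2)"
          using walk_from_H[OF n1 st2 rng2] sum0 H20 by simp
        have "d \<le> d - 2"
          using mini[OF w2] H20 H2d xH x0 xd by auto
        then show False using ab by auto
      qed
    qed
  qed
  show ?thesis using main by blast
qed

lemma finish:
  assumes geo: "dyoke_geodesic n m x d z w" and xH: "\<forall>t\<le>d. x t = vtx n m (H t)"
    and walk': "dyoke_walk n m (\<lambda>t. vtx n m (H' t)) d" and H'0: "H' 0 = H 0" and H'd: "H' d = H d"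
    and f1: "\<And>j t. j \<noteq> i \<Longrightarrow> t \<le> d \<Longrightarrow> \<exists>t'\<le>d. H' t j = H t' j"
    and f2: "\<And>j t. j \<noteq> i \<Longrightarrow> t \<le> d \<Longrightarrow> \<exists>t'\<le>d. H t j = H' t' j"
    and cnt: "{t. t \<le> d \<and> H' t i = c} \<subset> {t. t \<le> d \<and> H t i = c}"
    and i: "1 \<le> i" "i \<le> m"
  shows "\<exists>y. dyoke_geodesic n m y d z w \<and> card {t. t \<le> d \<and> y t ! i = c} < card {t. t \<le> d \<and> x t ! i = c}
     \<and> (\<forall>j\<le>m+1. j \<noteq> i \<longrightarrow> {y t ! j | t. t \<le> d} = {x t ! j | t. t \<le> d})"
proof (intro exI conjI)
  let ?y = "\<lambda>t. vtx n m (H' t)"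
  show "dyoke_geodesic n m ?y d z w"
    using geo walk' H'0 H'd xH unfolding dyoke_geodesic_def by auto
  have e1: "{t. t \<le> d \<and> ?y t ! i = c} = {t. t \<le> d \<and> H' t i = c}" using i by (auto simp: vtx_nth_int)
  have e2: "{t. t \<le> d \<and> x t ! i = c} = {t. t \<le> d \<and> H t i = c}" using i xH by (auto simp: vtx_nth_int)
  show "card {t. t \<le> d \<and> ?y t ! i = c} < card {t. t \<le> d \<and> x t ! i = c}"
    unfolding e1 e2 by (rule psubset_card_mono[OF _ cnt]) simp
  show "\<forall>j\<le>m+1. j \<noteq> i \<longrightarrow> {?y t ! j | t. t \<le> d} = {x t ! j | t. t \<le> d}"
  proof (intro allI impI)
    fix j assume j: "j \<le> m + 1" "j \<noteq> i"
    have yj: "?y t ! j = nrm n m j (H' t j)" for t using j by (simp add: vtx_nth)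
    have xj: "t \<le> d \<Longrightarrow> x t ! j = nrm n m j (H t j)" for t using j xH by (simp add: vtx_nth)
    show "{?y t ! j | t. t \<le> d} = {x t ! j | t. t \<le> d}"
    proof
      show "{?y t ! j | t. t \<le> d} \<subseteq> {x t ! j | t. t \<le> d}"
      proof
        fix v assume "v \<in> {?y t ! j | t. t \<le> d}"
        then obtain t where t: "t \<le> d" "v = ?y t ! j" by blast
        obtain t' where t': "t' \<le> d" "H' t j = H t' j" using f1[OF j(2) t(1)] by blast
        then have "v = x t' ! j" using t yj xj[of t'] by auto
        then show "v \<in> {x t ! j | t. t \<le> d}" using t'(1) by blast
      qed
    next
      show "{x t ! j | t. t \<le> d} \<subseteq> {?y t ! j | t. t \<le> d}"
      proof
        fix v assume "v \<in> {x t ! j | t. t \<le> d}"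
        then obtain t where t: "t \<le> d" "v = x t ! j" by blast
        obtain t' where t': "t' \<le> d" "H t j = H' t' j" using f2[OF j(2) t(1)] by blast
        then have "v = ?y t' ! j" using t yj[of t'] xj[of t] by auto
        then show "v \<in> {?y t ! j | t. t \<le> d}" using t'(1) by blast
      qed
    qed
  qed
qed

lemma improve:
  assumes n1: "n \<ge> 1" and geo: "dyoke_geodesic n m x d z (dyoke_zero m)"
    and i: "1 \<le> i" "i \<le> m" and zi: "z ! i = 0" and c: "c = 1 \<or> c = -1"
    and ex: "\<exists>t\<le>d. x t ! i = c"
  shows "\<exists>y. dyoke_geodesic n m y d z (dyoke_zero m) \<and> card {t. t \<le> d \<and> y t ! i = c} < card {t. t \<le> d \<and> x t ! i = c}
     \<and> (\<forall>j\<le>m+1. j \<noteq> i \<longrightarrow> {y t ! j | t. t \<le> d} = {x t ! j | t. t \<le> d})"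
proof -
  have walk: "dyoke_walk n m x d" and x0: "x 0 = z" and xd: "x d = dyoke_zero m"
    using geo by (auto simp: dyoke_geodesic_def)
  obtain H l where st: "stepsok m H l d" and xH: "\<forall>t\<le>d. x t = vtx n m (H t)" and H0: "\<forall>j. H 0 j = x 0 ! j"
    using H_from_walk[OF walk] by blast
  have stp: "stepok m (l t)" "\<And>j. H (Suc t) j = H t j + ev (l t) j" if "t < d" for t
    using st that by (auto simp: stepsok_def)
  have rng: "H t j \<in> {-1,0,1}" if "t \<le> d" "1 \<le> j" "j \<le> m" for t j
    using walk_H_range(1)[OF walk xH that] .
  have xi: "x t ! i = H t i" if "t \<le> d" for t using walk_H_range(2)[OF walk xH that i] .
  have sum0: "(\<Sum>j<m+2. H 0 j) mod int n = 0" using walk_H_sum[OF n1 walk xH] .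
  have ss: "\<And>a b. a < b \<Longrightarrow> b < d \<Longrightarrow> fst (l a) = fst (l b) \<Longrightarrow> snd (l a) = snd (l b)"
    using same_sign[OF n1 geo st xH] by blast
  have Hi0: "H 0 i = 0" using H0 x0 zi by simp
  have "dyoke_zero m ! i = 0" unfolding dyoke_zero_def using i nth_replicate[of i "m+2" "0::int"] by linarith
  then have Hid: "H d i = 0" using xi[of d] xd by simp
  have c0: "c \<noteq> 0" using c by auto
  obtain t1 where t1: "t1 \<le> d" "H t1 i = c" using ex xi by auto
  define t0 where "t0 = (LEAST t. H t i = c)"
  have t0c: "H t0 i = c" using t1(2) unfolding t0_def by (rule LeastI)
  have t0le: "t0 \<le> t1" using t1(2) unfolding t0_def by (rule Least_le)
  have t0ne: "t0 \<noteq> 0" "t0 \<noteq> d" using t0c Hi0 Hid c0 by metis+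
  define s where "s = t0 - 1"
  have ts: "t0 = Suc s" using t0ne s_def by auto
  have Hs: "H s i \<noteq> c" using not_less_Least[of s "\<lambda>t. H t i = c"] ts t0_def by auto
  have sd: "Suc s < d" using t0le t1 t0ne ts by auto
  define e where "e = (LEAST q. Suc s \<le> q \<and> H (Suc q) i \<noteq> c)"
  have ex_e: "Suc s \<le> d - 1 \<and> H (Suc (d - 1)) i \<noteq> c" using sd Hid c0 by auto
  have e1: "Suc s \<le> e \<and> H (Suc e) i \<noteq> c" using ex_e unfolding e_def by (rule LeastI)
  have e2: "e \<le> d - 1" using ex_e unfolding e_def by (rule Least_le)
  have e3: "H (Suc q) i = c" if "Suc s \<le> q" "q < e" for q
    using not_less_Least[of q "\<lambda>q. Suc s \<le> q \<and> H (Suc q) i \<noteq> c"] that e_def by auto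
  have ed: "e < d" using e2 sd by auto
  have segc: "H q i = c" if "Suc s \<le> q" "q \<le> e" for q
  proof (cases "q = Suc s")
    case True then show ?thesis using t0c ts by simp
  next
    case False
    then have "q = Suc (q - 1)" "Suc s \<le> q - 1" "q - 1 < e" using that by auto
    then show ?thesis using e3[of "q-1"] by metis
  qed
  have sa: "stepok m (l s)" "stepok m (l e)" using stp sd ed by auto
  have Hs0: "H s i = 0" and evs: "ev (l s) i = c"
    using stp(2)[of s i] sd rng[of s i] i Hs t0c ts ev_vals[OF sa(1), of i] c by auto
  have eve: "ev (l e) i = - c"
    using stp(2)[of e i] ed rng[of "Suc e" i] i e1 segc[of e] ev_vals[OF sa(2), of i] c by auto
  have midq: "ev (l q) i = 0" if "s < q" "q < e" for q
    using stp(2)[of q i] segc[of q] segc[of "Suc q"] that ed by auto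
  define a where "a = fst (l s)"
  define b where "b = fst (l e)"
  have ia: "i = a \<or> i = Suc a" using ev_nz[OF sa(1), of i] evs c0 a_def by auto
  have ib: "i = b \<or> i = Suc b" using ev_nz[OF sa(2), of i] eve c0 b_def by auto
  have ab: "a \<noteq> b"
  proof
    assume "a = b"
    then have "snd (l s) = snd (l e)" using ss[of s e] e1 ed a_def b_def by auto
    then have "l s = l e" using \<open>a = b\<close> a_def b_def by (simp add: prod_eq_iff)
    then show False using evs eve c0 by simp
  qed
  have midk: "i \<noteq> fst (l q) \<and> i \<noteq> Suc (fst (l q))" if "s < q" "q < e" for q
    using midq[OF that] ev_nz[of m "l q" i] stp(1)[of q] that ed by auto
  define bside where "bside k \<longleftrightarrow> (if b = i then i < k else Suc k < i)" for k
  have Hsd: "H' 0 = H 0" "H' d = H d" if "H' = (\<lambda>t. if s < t \<and> t \<le> p then (\<lambda>j. H (t-1) j + ev (l p) j) else H t)" "p < d" for H' p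
    using that by auto
  show ?thesis
  proof (cases "\<exists>p. s < p \<and> p < e \<and> bside (fst (l p))")
    case True
    define p where "p = (LEAST p. s < p \<and> p < e \<and> bside (fst (l p)))"
    have p1: "s < p \<and> p < e \<and> bside (fst (l p))" using True unfolding p_def by (rule LeastI_ex)
    have p2: "\<not> bside (fst (l q))" if "s < q" "q < p" for q
      using not_less_Least[of q "\<lambda>p. s < p \<and> p < e \<and> bside (fst (l p))"] that p1 p_def by auto
    have pd: "p < d" using p1 ed by auto
    have sp: "stepok m (l p)" using stp pd by auto
    have noconf: "ev (l q) j = 0" if "ev (l p) j \<noteq> 0" "j \<noteq> i" "s \<le> q" "q < p" for j q
    proof (rule ccontr)
      assume nz: "ev (l q) j \<noteq> 0"
      have sq: "stepok m (l q)" using stp that pd by auto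
      have jp: "j = fst (l p) \<or> j = Suc (fst (l p))" using ev_nz[OF sp] that by auto
      have jq: "j = fst (l q) \<or> j = Suc (fst (l q))" using ev_nz[OF sq] nz by auto
      show False
      proof (cases "q = s")
        case True
        then show False using jp jq ia ib ab p1 that a_def unfolding bside_def by (auto split: if_splits)
      next
        case False
        then have "s < q" using that by auto
        then show False using jp jq ia ib ab p1 p2[of q] midk[of q] that unfolding bside_def
          by (auto split: if_splits)
      qed
    qed
    have evpi: "ev (l p) i = 0" using midq p1 by auto
    have rngi: "H (t-1) i + ev (l p) i \<in> {-1,0,1}" if "s < t" "t \<le> p" for t
      using rng[of "t-1" i] evpi that pd i by auto
    define H' where "H' = (\<lambda>t. if s < t \<and> t \<le> p then (\<lambda>j. H (t-1) j + ev (l p) j) else H t)"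
    note R = rotate[OF n1 st rng sum0 _ pd noconf rngi H'_def]
    have cnt: "{t. t \<le> d \<and> H' t i = c} \<subset> {t. t \<le> d \<and> H t i = c}"
    proof
      show "{t. t \<le> d \<and> H' t i = c} \<subseteq> {t. t \<le> d \<and> H t i = c}"
      proof
        fix t assume "t \<in> {t. t \<le> d \<and> H' t i = c}"
        then have t: "t \<le> d" "H' t i = c" by auto
        show "t \<in> {t. t \<le> d \<and> H t i = c}"
        proof (cases "s < t \<and> t \<le> p")
          case True
          then have "H (t-1) i = c" using t evpi by (simp add: H'_def)
          then have "t - 1 \<noteq> s" using Hs0 c0 by auto
          then show ?thesis using segc[of t] True p1 t by auto
        next
          case False then show ?thesis using t by (auto simp: H'_def)
        qed
      qed
      have "Suc s \<in> {t. t \<le> d \<and> H t i = c}" using sd t0c ts by auto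
      moreover have "Suc s \<notin> {t. t \<le> d \<and> H' t i = c}" using p1 Hs0 evpi c0 by (auto simp: H'_def)
      ultimately show "{t. t \<le> d \<and> H' t i = c} \<noteq> {t. t \<le> d \<and> H t i = c}" by blast
    qed
    show ?thesis
      using finish[OF geo xH R(1) _ _ R(2) R(3) cnt i] Hsd[OF H'_def pd] p1 by auto
  next
    case False
    have noconf: "ev (l q) j = 0" if "ev (l e) j \<noteq> 0" "j \<noteq> i" "s \<le> q" "q < e" for j q
    proof (rule ccontr)
      assume nz: "ev (l q) j \<noteq> 0"
      have sq: "stepok m (l q)" using stp that ed by auto
      have jp: "j = b \<or> j = Suc b" using ev_nz[OF sa(2)] that b_def by auto
      have jq: "j = fst (l q) \<or> j = Suc (fst (l q))" using ev_nz[OF sq] nz by auto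
      show False
      proof (cases "q = s")
        case True
        then show False using jp jq ia ib ab that a_def by auto
      next
        case False
        then have "s < q" using that by auto
        then show False using jp jq ia ib ab \<open>\<not> (\<exists>p. s < p \<and> p < e \<and> bside (fst (l p)))\<close> midk[of q] that
          unfolding bside_def by (auto split: if_splits)
      qed
    qed
    have rngi: "H (t-1) i + ev (l e) i \<in> {-1,0,1}" if "s < t" "t \<le> e" for t
    proof (cases "t = Suc s")
      case True then show ?thesis using Hs0 eve c by auto
    next
      case False then show ?thesis using segc[of "t-1"] eve that by auto
    qed
    define H' where "H' = (\<lambda>t. if s < t \<and> t \<le> e then (\<lambda>j. H (t-1) j + ev (l e) j) else H t)"
    have se: "s < e" using e1 by auto
    note R = rotate[OF n1 st rng sum0 se ed noconf rngi H'_def]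
    have cnt: "{t. t \<le> d \<and> H' t i = c} \<subset> {t. t \<le> d \<and> H t i = c}"
    proof
      show "{t. t \<le> d \<and> H' t i = c} \<subseteq> {t. t \<le> d \<and> H t i = c}"
      proof
        fix t assume "t \<in> {t. t \<le> d \<and> H' t i = c}"
        then have t: "t \<le> d" "H' t i = c" by auto
        show "t \<in> {t. t \<le> d \<and> H t i = c}"
        proof (cases "s < t \<and> t \<le> e")
          case True
          then have "H (t-1) i = 2 * c" using t eve by (simp add: H'_def)
          moreover have "t - 1 \<le> d" using t by auto
          ultimately show ?thesis using rng[of "t-1" i] i c by auto
        next
          case False then show ?thesis using t by (auto simp: H'_def)
        qed
      qed
      have "Suc s \<in> {t. t \<le> d \<and> H t i = c}" using sd t0c ts by auto
      moreover have "Suc s \<notin> {t. t \<le> d \<and> H' t i = c}" using se Hs0 eve c by (auto simp: H'_def)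
      ultimately show "{t. t \<le> d \<and> H' t i = c} \<noteq> {t. t \<le> d \<and> H t i = c}" by blast
    qed
    show ?thesis
      using finish[OF geo xH R(1) _ _ R(2) R(3) cnt i] Hsd[OF H'_def ed] by auto
  qed
qed

lemma iterate:
  assumes n1: "n \<ge> 1" and i: "1 \<le> i" "i \<le> m" and zi: "z ! i = 0" and c: "c = 1 \<or> c = -1"
  shows "dyoke_geodesic n m x d z (dyoke_zero m) \<Longrightarrow> \<exists>y. dyoke_geodesic n m y d z (dyoke_zero m)
     \<and> (\<forall>t\<le>d. y t ! i \<noteq> c) \<and> (\<forall>j\<le>m+1. j \<noteq> i \<longrightarrow> {y t ! j | t. t \<le> d} = {x t ! j | t. t \<le> d})"
proof (induction "card {t. t \<le> d \<and> x t ! i = c}" arbitrary: x rule: less_induct)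
  case less
  show ?case
  proof (cases "\<exists>t\<le>d. x t ! i = c")
    case True
    obtain x' where x': "dyoke_geodesic n m x' d z (dyoke_zero m)"
      "card {t. t \<le> d \<and> x' t ! i = c} < card {t. t \<le> d \<and> x t ! i = c}"
      "\<forall>j\<le>m+1. j \<noteq> i \<longrightarrow> {x' t ! j | t. t \<le> d} = {x t ! j | t. t \<le> d}"
      using improve[OF n1 less.prems i zi c True] by blast
    obtain y where y: "dyoke_geodesic n m y d z (dyoke_zero m)" "\<forall>t\<le>d. y t ! i \<noteq> c"
      "\<forall>j\<le>m+1. j \<noteq> i \<longrightarrow> {y t ! j | t. t \<le> d} = {x' t ! j | t. t \<le> d}"
      using less.hyps[OF x'(2) x'(1)] by blast
    show ?thesis using y x'(3) by (intro exI[of _ y]) auto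
  next
    case False
    then show ?thesis using less.prems by (intro exI[of _ x]) auto
  qed
qed

theorem lemma4p3:
  fixes n m i d :: nat and z :: "int list" and x :: "nat \<Rightarrow> int list"
  assumes "n \<ge> 1"
    and "dyoke_vert n m z"
    and "1 \<le> i" and "i \<le> m" and "z ! i = 0"
    and "dyoke_geodesic n m x d z (dyoke_zero m)"
  shows "(\<exists>y. dyoke_geodesic n m y d z (dyoke_zero m)
            \<and> (\<forall>t\<le>d. y t ! i \<le> 0)
            \<and> (\<forall>j\<le>m+1. j \<noteq> i \<longrightarrow> {y t ! j | t. t \<le> d} = {x t ! j | t. t \<le> d}))
       \<and> (\<exists>y. dyoke_geodesic n m y d z (dyoke_zero m)
            \<and> (\<forall>t\<le>d. y t ! i \<ge> 0)
            \<and> (\<forall>j\<le>m+1. j \<noteq> i \<longrightarrow> {y t ! j | t. t \<le> d} = {x t ! j | t. t \<le> d}))"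
proof -
  have vals: "y t ! i \<in> {-1,0,1}" if "dyoke_geodesic n m y d z (dyoke_zero m)" "t \<le> d" for y t
  proof -
    have "dyoke_vert n m (y t)" using that by (auto simp: dyoke_geodesic_def dyoke_walk_def)
    then show ?thesis using assms(3,4) by (auto simp: dyoke_vert_def)
  qed
  obtain y1 where y1: "dyoke_geodesic n m y1 d z (dyoke_zero m)" "\<forall>t\<le>d. y1 t ! i \<noteq> 1"
      "\<forall>j\<le>m+1. j \<noteq> i \<longrightarrow> {y1 t ! j | t. t \<le> d} = {x t ! j | t. t \<le> d}"
    using iterate[OF assms(1,3,4,5), of 1, OF _ assms(6)] by blast
  obtain y2 where y2: "dyoke_geodesic n m y2 d z (dyoke_zero m)" "\<forall>t\<le>d. y2 t ! i \<noteq> -1"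
      "\<forall>j\<le>m+1. j \<noteq> i \<longrightarrow> {y2 t ! j | t. t \<le> d} = {x t ! j | t. t \<le> d}"
    using iterate[OF assms(1,3,4,5), of "-1", OF _ assms(6)] by blast
  have "\<forall>t\<le>d. y1 t ! i \<le> 0" using y1(1,2) vals by fastforce
  moreover have "\<forall>t\<le>d. y2 t ! i \<ge> 0" using y2(1,2) vals by fastforce
  ultimately show ?thesis using y1 y2 by blast
qed

end
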